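(* Let $M$ be a strongly sofic monoid and let $A$ be a finite set. Then the monoid $\mathrm{CA}(M,A)$ is directly finite; in other words, $\mathrm{CA}(M,A)$ contains no submonoid isomorphic to the bicyclic monoid $\langle p,q : pq = 1\rangle$.
   Context: A monoid $M$ is strongly sofic if for every finite subset $K \subset M$ there exists an integer $\Delta_K \geq 1$ such that for every $\varepsilon > 0$ there exist a non-empty finite set $D$ and a map $\sigma \colon M \to \operatorname{Map}(D)$ (where $\operatorname{Map}(D)$ is the monoid of all maps $D \to D$ under composition) satisfying: (1) $\sigma(1_M) = \mathrm{Id}_D$; (2) $d_D^{\mathrm{Ham}}(\sigma(k_1k_2),\sigma(k_1)\sigma(k_2)) \leq \varepsilon$ for all $k_1,k_2 \in K$; (3) $d_D^{\mathrm{Ham}}(\sigma(k_1),\sigma(k_2)) \geq 1-\varepsilon$ for all distinct $k_1,k_2 \in K$; (4) $|\sigma(k)^{-1}(v)| \leq \Delta_K$ for all $k \in K$, $v \in D$. Here $d_D^{\mathrm{Ham}}(f,g) = \frac{1}{|D|}|\{v \in D : f(v) \neq g(v)\}|$. For a finite set $A$, $A^M$ is the set of maps $M \to A$ with the prodiscrete topology and shift action $(mx)(m') = x(m'm)$. $\mathrm{CA}(M,A)$ is the monoid (under composition) of all continuous $M$-equivariant maps $\tau \colon A^M \to A^M$ (cellular automata). A monoid is directly finite if $mm' = 1$ implies $m'm = 1$. *)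

theory Defs
  imports "HOL-Analysis.Analysis"
begin

definition ham_dist :: "nat set \<Rightarrow> (nat \<Rightarrow> nat) \<Rightarrow> (nat \<Rightarrow> nat) \<Rightarrow> real" where
  "ham_dist D f g = real (card {v \<in> D. f v \<noteq> g v}) / real (card D)"

text \<open>Finite sets D are taken (w.l.o.g., up to
bijection) as finite subsets of nat; Map(D) is represented by functions nat => nat
mapping D into D (only their values on D matter).\<close>
definition strongly_sofic :: "'m::monoid_mult itself \<Rightarrow> bool" where
  "strongly_sofic _ \<longleftrightarrow>
    (\<forall>K::'m set. finite K \<longrightarrow>
      (\<exists>\<Delta>::nat. \<Delta> \<ge> 1 \<and>
        (\<forall>\<epsilon>::real. \<epsilon> > 0 \<longrightarrow>
          (\<exists>(D::nat set) (\<sigma>::'m \<Rightarrow> nat \<Rightarrow> nat).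
             finite D \<and> D \<noteq> {} \<and>
             (\<forall>m. \<forall>v\<in>D. \<sigma> m v \<in> D) \<and>
             (\<forall>v\<in>D. \<sigma> 1 v = v) \<and>
             (\<forall>k1\<in>K. \<forall>k2\<in>K. ham_dist D (\<sigma> (k1 * k2)) (\<sigma> k1 \<circ> \<sigma> k2) \<le> \<epsilon>) \<and>
             (\<forall>k1\<in>K. \<forall>k2\<in>K. k1 \<noteq> k2 \<longrightarrow> ham_dist D (\<sigma> k1) (\<sigma> k2) \<ge> 1 - \<epsilon>) \<and>
             (\<forall>k\<in>K. \<forall>v\<in>D. card {u \<in> D. \<sigma> k u = v} \<le> \<Delta>)))))"

definition config_top :: "'m itself \<Rightarrow> 'a set \<Rightarrow> ('m \<Rightarrow> 'a) topology" where
  "config_top _ A = product_topology (\<lambda>_::'m. discrete_topology A) UNIV"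

definition shift :: "'m::monoid_mult \<Rightarrow> ('m \<Rightarrow> 'a) \<Rightarrow> ('m \<Rightarrow> 'a)" where
  "shift m x = (\<lambda>m'. x (m' * m))"

definition CA :: "'m::monoid_mult itself \<Rightarrow> 'a set \<Rightarrow> (('m \<Rightarrow> 'a) \<Rightarrow> ('m \<Rightarrow> 'a)) set" where
  "CA M A = {\<tau>. continuous_map (config_top M A) (config_top M A) \<tau> \<and>
      (\<forall>m. \<forall>x \<in> topspace (config_top M A). \<tau> (shift m x) = shift m (\<tau> x))}"

text \<open>Direct finiteness of the monoid CA(M,A) under composition, with identity
Id_{A^M}; elements are maps A^M -> A^M, so equality is equality on A^M.\<close>
definition CA_directly_finite :: "'m::monoid_mult itself \<Rightarrow> 'a set \<Rightarrow> bool" where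
  "CA_directly_finite M A \<longleftrightarrow>
    (\<forall>\<sigma> \<in> CA M A. \<forall>\<tau> \<in> CA M A.
       (\<forall>x \<in> topspace (config_top M A). \<sigma> (\<tau> x) = x) \<longrightarrow>
       (\<forall>x \<in> topspace (config_top M A). \<tau> (\<sigma> x) = x))"

end

theory Submission
  imports Defs
begin


lemma ts: "topspace (config_top TYPE('m) A) = {x. \<forall>m. x m \<in> A}"
  by (auto simp: config_top_def topspace_product_topology PiE_def extensional_def)

lemma cpt: "finite A \<Longrightarrow> compact_space (config_top TYPE('m) A)"
  by (simp add: config_top_def compact_space_product_topology compact_space_discrete_topology)

lemma open_cyl:
  assumes "finite F" "\<forall>i. x i \<in> A"
  shows "openin (config_top TYPE('m) A) {y. (\<forall>m. y m \<in> A) \<and> (\<forall>i\<in>F. y i = (x::'m \<Rightarrow> 'a) i)}"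
proof -
  have eq: "{y. (\<forall>m. y m \<in> A) \<and> (\<forall>i\<in>F. y i = x i)} = PiE UNIV (\<lambda>i. if i \<in> F then {x i} else A)"
    using assms(2) by (auto simp: PiE_def extensional_def split: if_splits)
  have "finite {i \<in> UNIV. (if i \<in> F then {x i} else A) \<noteq> topspace (discrete_topology A)}"
    by (rule finite_subset[OF _ assms(1)]) auto
  then show ?thesis unfolding eq config_top_def openin_PiE_gen using assms(2) by auto
qed

lemma ca_local:
  assumes "finite A" "\<tau> \<in> CA TYPE('m::monoid_mult) A"
  shows "\<exists>S. finite S \<and> (\<forall>x y. (\<forall>m. x m \<in> A) \<longrightarrow> (\<forall>m. y m \<in> A) \<longrightarrow> (\<forall>s\<in>S. x s = y s) \<longrightarrow> \<tau> x 1 = \<tau> y (1::'m))"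
proof -
  let ?X = "config_top TYPE('m) A"
  have cm: "continuous_map ?X ?X \<tau>" using assms(2) by (simp add: CA_def)
  have loc: "\<exists>F. finite F \<and> (\<forall>y. (\<forall>m. y m \<in> A) \<longrightarrow> (\<forall>i\<in>F. y i = x i) \<longrightarrow> \<tau> y 1 = \<tau> x 1)"
    if x: "\<forall>m. x m \<in> A" for x :: "'m \<Rightarrow> 'a"
  proof -
    have tx: "\<tau> x \<in> topspace ?X" using cm x by (auto simp: continuous_map_def ts)
    have p: "continuous_map ?X (discrete_topology A) (\<lambda>z. z 1)"
      unfolding config_top_def by (rule continuous_map_product_projection) simp
    have "openin ?X {z \<in> topspace ?X. z 1 \<in> {\<tau> x 1}}"
      by (rule openin_continuous_map_preimage[OF p]) (use tx in \<open>auto simp: ts\<close>)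
    then have "openin ?X {y \<in> topspace ?X. \<tau> y \<in> {z \<in> topspace ?X. z 1 \<in> {\<tau> x 1}}}"
      by (rule openin_continuous_map_preimage[OF cm])
    moreover have "x \<in> {y \<in> topspace ?X. \<tau> y \<in> {z \<in> topspace ?X. z 1 \<in> {\<tau> x 1}}}"
      using tx x by (auto simp: ts)
    ultimately have "\<exists>U. finite {i \<in> UNIV. U i \<noteq> topspace (discrete_topology A)} \<and> (\<forall>i\<in>UNIV. openin (discrete_topology A) (U i)) \<and>
      x \<in> PiE UNIV U \<and> PiE UNIV U \<subseteq> {y \<in> topspace ?X. \<tau> y \<in> {z \<in> topspace ?X. z 1 \<in> {\<tau> x 1}}}"
      unfolding config_top_def openin_product_topology_alt by blast
    then obtain U where U: "finite {i \<in> UNIV. U i \<noteq> topspace (discrete_topology A)}"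
      "x \<in> PiE UNIV U" "PiE UNIV U \<subseteq> {y \<in> topspace ?X. \<tau> y \<in> {z \<in> topspace ?X. z 1 \<in> {\<tau> x 1}}}"
      by blast
    show ?thesis
    proof (intro exI conjI allI impI)
      show "finite {i \<in> UNIV. U i \<noteq> topspace (discrete_topology A)}" by fact
      fix y assume y: "\<forall>m. y m \<in> A" "\<forall>i\<in>{i \<in> UNIV. U i \<noteq> topspace (discrete_topology A)}. y i = x i"
      have "y \<in> PiE UNIV U"
      proof (auto simp: PiE_def extensional_def)
        fix i show "y i \<in> U i" using y U(2) by (cases "U i = A") (auto simp: PiE_def)
      qed
      then show "\<tau> y 1 = \<tau> x 1" using U(3) by auto
    qed
  qed
  then obtain F where F: "\<And>x. \<forall>m. x m \<in> A \<Longrightarrow> finite (F x) \<and> (\<forall>y. (\<forall>m. y m \<in> A) \<longrightarrow> (\<forall>i\<in>F x. y i = x i) \<longrightarrow> \<tau> y 1 = \<tau> x 1)"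
    by metis
  define W where "W x = {y. (\<forall>m. y m \<in> A) \<and> (\<forall>i\<in>F x. y i = (x::'m\<Rightarrow>'a) i)}" for x
  have "compactin ?X (topspace ?X)" using cpt[OF assms(1)] by (simp add: compact_space_def)
  moreover have "\<forall>U\<in>W ` topspace ?X. openin ?X U"
    using F unfolding W_def by (auto simp: ts intro!: open_cyl)
  moreover have "topspace ?X \<subseteq> \<Union> (W ` topspace ?X)"
    by (auto simp: ts W_def)
  ultimately obtain \<F> where \<F>: "finite \<F>" "\<F> \<subseteq> W ` topspace ?X" "topspace ?X \<subseteq> \<Union> \<F>"
    unfolding compactin_def by metis
  then obtain C where C: "C \<subseteq> topspace ?X" "finite C" "\<F> = W ` C"
    by (meson finite_subset_image)
  show ?thesis
  proof (intro exI[of _ "\<Union> (F ` C)"] conjI allI impI)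
    show "finite (\<Union> (F ` C))" using C F by (auto simp: ts)
    fix x y :: "'m \<Rightarrow> 'a"
    assume x: "\<forall>m. x m \<in> A" and y: "\<forall>m. y m \<in> A" and e: "\<forall>s\<in>\<Union> (F ` C). x s = y s"
    from x \<F>(3) C(3) obtain c where c: "c \<in> C" "x \<in> W c" by (auto simp: ts)
    have c': "\<forall>m. c m \<in> A" using c C(1) by (auto simp: ts)
    have "\<tau> x 1 = \<tau> c 1" using F[OF c'] x c(2) by (auto simp: W_def)
    moreover have "\<tau> y 1 = \<tau> c 1" using F[OF c'] y c e by (auto simp: W_def)
    ultimately show "\<tau> x 1 = \<tau> y 1" by simp
  qed
qed




lemma indep:
  fixes G :: "'v set"
  assumes "finite G" "\<forall>u v. R u v \<longrightarrow> R v u" "\<forall>v\<in>G. card (insert v {u\<in>G. R u v}) \<le> L"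
  shows "\<exists>V\<subseteq>G. (\<forall>u\<in>V. \<forall>v\<in>V. u \<noteq> v \<longrightarrow> \<not> R u v) \<and> card G \<le> L * card V"
  using assms
proof (induction "card G" arbitrary: G rule: less_induct)
  case less
  show ?case
  proof (cases "G = {}")
    case True then show ?thesis by auto
  next
    case False
    then obtain v where v: "v \<in> G" by auto
    define G' where "G' = G - insert v {u\<in>G. R u v}"
    have fin: "finite G'" using less.prems by (simp add: G'_def)
    have sub: "insert v {u\<in>G. R u v} \<subseteq> G" using v by auto
    have cG: "card G = card G' + card (insert v {u\<in>G. R u v})"
      unfolding G'_def using card_Diff_subset[OF finite_subset[OF sub less.prems(1)] sub]
        card_mono[OF less.prems(1) sub] by simp
    have "card (insert v {u\<in>G. R u v}) > 0" using finite_subset[OF sub less.prems(1)] by (simp add: card_gt_0_iff)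
    then have "card G' < card G" using cG by simp
    moreover have "\<forall>w\<in>G'. card (insert w {u\<in>G'. R u w}) \<le> L"
    proof
      fix w assume w: "w \<in> G'"
      have "card (insert w {u\<in>G'. R u w}) \<le> card (insert w {u\<in>G. R u w})"
        by (rule card_mono) (use less.prems(1) in \<open>auto simp: G'_def\<close>)
      also have "\<dots> \<le> L" using less.prems(3) w by (auto simp: G'_def)
      finally show "card (insert w {u\<in>G'. R u w}) \<le> L" .
    qed
    ultimately obtain V where V: "V \<subseteq> G'" "\<forall>u\<in>V. \<forall>w\<in>V. u \<noteq> w \<longrightarrow> \<not> R u w" "card G' \<le> L * card V"
      using less.hyps[of G'] fin less.prems(2) by blast
    have vV: "v \<notin> V" using V(1) by (auto simp: G'_def)
    have finV: "finite V" using V(1) fin finite_subset by blast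
    show ?thesis
    proof (intro exI[of _ "insert v V"] conjI)
      show "insert v V \<subseteq> G" using V(1) v by (auto simp: G'_def)
      show "\<forall>u\<in>insert v V. \<forall>w\<in>insert v V. u \<noteq> w \<longrightarrow> \<not> R u w"
        using V(1,2) less.prems(2) by (auto simp: G'_def)
      show "card G \<le> L * card (insert v V)"
      proof -
        have "card (insert v {u\<in>G. R u v}) \<le> L" using less.prems(3) v by blast
        then show ?thesis using cG V(3) vV finV by simp
      qed
    qed
  qed
qed

lemma final_arith:
  fixes a b r k N bad n :: nat
  assumes a: "a \<ge> 1" and b: "b = a ^ r" and rho: "((real b - 1) / real b) ^ k < 1 / real a"
    and N: "N > k * bad" and bd: "bad \<le> n" and Nr: "N * r \<le> n"
    and ineq: "a ^ (n - bad) \<le> a ^ (n - N * r) * (b - 1) ^ N"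
  shows False
proof -
  define \<rho> where "\<rho> = (real b - 1) / real b"
  have b1: "b \<ge> 1" using a b by simp
  have r0: "0 \<le> \<rho>" "\<rho> < 1" using b1 by (auto simp: \<rho>_def divide_simps)
  have "\<rho> ^ N \<le> \<rho> ^ (k * bad + 1)"
    by (rule power_decreasing) (use N r0 in auto)
  also have "\<dots> = \<rho> * (\<rho> ^ k) ^ bad" by (simp add: power_mult)
  also have "\<dots> \<le> \<rho> * (1 / real a) ^ bad"
    by (rule mult_left_mono[OF power_mono]) (use rho r0 in \<open>auto simp: \<rho>_def\<close>)
  also have "\<dots> < (1 / real a) ^ bad"
  proof -
    have X: "0 < (1 / real a) ^ bad" using a by simp
    from mult_strict_right_mono[OF r0(2) X] show ?thesis by simp
  qed
  finally have "\<rho> ^ N < (1 / real a) ^ bad" .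
  then have "real a ^ bad * \<rho> ^ N < 1" using a by (simp add: power_one_over field_simps)
  then have "real a ^ bad * \<rho> ^ N * real b ^ N < real b ^ N" using b1 by simp
  moreover have "\<rho> ^ N * real b ^ N = (real b - 1) ^ N"
    using b1 by (simp add: \<rho>_def power_divide)
  ultimately have lt: "real a ^ bad * (real b - 1) ^ N < real b ^ N" by (simp add: mult.assoc)
  have "real a ^ (n - bad) * real b ^ N \<le> real a ^ (n - N * r) * (real b - 1) ^ N * real b ^ N"
  proof -
    have "real (a ^ (n - bad)) \<le> real (a ^ (n - N * r) * (b - 1) ^ N)"
      using ineq by (simp only: of_nat_le_iff)
    then have "real a ^ (n - bad) \<le> real a ^ (n - N * r) * (real b - 1) ^ N"
      using b1 by (simp add: of_nat_diff)
    then show ?thesis by (rule mult_right_mono) simp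
  qed
  also have "\<dots> = real a ^ n * (real b - 1) ^ N"
  proof -
    have "real a ^ (n - N * r) * real b ^ N = real a ^ n"
      using Nr by (simp add: b power_mult[symmetric] power_add[symmetric] mult.commute)
    then show ?thesis by (simp add: algebra_simps)
  qed
  also have "\<dots> = real a ^ (n - bad) * (real a ^ bad * (real b - 1) ^ N)"
    using bd by (simp add: power_add[symmetric])
  also have "\<dots> < real a ^ (n - bad) * real b ^ N"
    using lt a by simp
  finally show False by simp
qed




lemma pattern:
  assumes finA: "finite A" and ca: "\<tau> \<in> CA TYPE('m::monoid_mult) A" and y: "\<forall>m. y m \<in> A"
    and ny: "\<forall>x. (\<forall>m. x m \<in> A) \<longrightarrow> \<tau> x \<noteq> y"
  shows "\<exists>\<Omega>. finite \<Omega> \<and> (\<forall>x. (\<forall>m. x m \<in> A) \<longrightarrow> (\<exists>\<omega>\<in>\<Omega>. \<tau> x \<omega> \<noteq> (y::'m \<Rightarrow> 'a) \<omega>))"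
proof -
  let ?X = "config_top TYPE('m) A"
  have cm: "continuous_map ?X ?X \<tau>" using ca by (simp add: CA_def)
  have "compactin ?X (\<tau> ` topspace ?X)"
    using image_compactin[OF cpt[OF finA, unfolded compact_space_def] cm] .
  moreover have "Hausdorff_space ?X" unfolding config_top_def
    by (simp add: Hausdorff_space_product_topology)
  ultimately have "closedin ?X (\<tau> ` topspace ?X)" using compactin_imp_closedin by blast
  then have op: "openin ?X (topspace ?X - \<tau> ` topspace ?X)" by (simp add: closedin_def)
  have yin: "y \<in> topspace ?X - \<tau> ` topspace ?X" using y ny by (auto simp: ts)
  have "\<exists>U. finite {i \<in> UNIV. U i \<noteq> topspace (discrete_topology A)} \<and> (\<forall>i\<in>UNIV. openin (discrete_topology A) (U i)) \<and>
      y \<in> PiE UNIV U \<and> PiE UNIV U \<subseteq> topspace ?X - \<tau> ` topspace ?X"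
    using op yin unfolding config_top_def openin_product_topology_alt by blast
  then obtain U where U: "finite {i \<in> UNIV. U i \<noteq> topspace (discrete_topology A)}"
      "y \<in> PiE UNIV U" "PiE UNIV U \<subseteq> topspace ?X - \<tau> ` topspace ?X"
    by blast
  show ?thesis
  proof (intro exI conjI allI impI)
    show "finite {i \<in> UNIV. U i \<noteq> topspace (discrete_topology A)}" by fact
    fix x :: "'m \<Rightarrow> 'a" assume x: "\<forall>m. x m \<in> A"
    show "\<exists>\<omega>\<in>{i \<in> UNIV. U i \<noteq> topspace (discrete_topology A)}. \<tau> x \<omega> \<noteq> y \<omega>"
    proof (rule ccontr)
      assume "\<not> ?thesis"
      then have e: "\<forall>i. U i \<noteq> A \<longrightarrow> \<tau> x i = y i" by auto
      have tx: "\<tau> x \<in> topspace ?X" using cm x by (auto simp: continuous_map_def ts)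
      have "\<tau> x \<in> PiE UNIV U"
      proof (auto simp: PiE_def extensional_def)
        fix i show "\<tau> x i \<in> U i" using e tx U(2) by (cases "U i = A") (auto simp: PiE_def ts)
      qed
      moreover have "x \<in> topspace ?X" using x by (simp add: ts)
      ultimately show False using U(3) by blast
    qed
  qed
qed

lemma ham1:
  assumes "finite D" "D \<noteq> {}" "ham_dist D f g \<le> \<epsilon>"
  shows "real (card {v\<in>D. f v \<noteq> g v}) \<le> \<epsilon> * real (card D)"
  using assms by (simp add: ham_dist_def divide_simps card_gt_0_iff)

lemma ham2:
  assumes "finite D" "D \<noteq> {}" "ham_dist D f g \<ge> 1 - \<epsilon>"
  shows "real (card {v\<in>D. f v = g v}) \<le> \<epsilon> * real (card D)"
proof -
  have "card {v\<in>D. f v = g v} + card {v\<in>D. f v \<noteq> g v} = card D"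
  proof -
    have "{v\<in>D. f v = g v} \<union> {v\<in>D. f v \<noteq> g v} = D" by auto
    then show ?thesis using assms(1) by (metis (no_types, lifting) card_Un_disjoint disjoint_iff finite_Un mem_Collect_eq)
  qed
  moreover have "(1 - \<epsilon>) * real (card D) \<le> real (card {v\<in>D. f v \<noteq> g v})"
    using assms by (simp add: ham_dist_def divide_simps card_gt_0_iff)
  ultimately show ?thesis by (simp add: algebra_simps of_nat_add[symmetric] del: of_nat_add)
qed




lemma aux_eps: "(q::real) > 0 \<Longrightarrow> c \<ge> 0 \<Longrightarrow> q * (c * (1 / (q * (c + 1))) * d) = c / (c + 1) * d"
  by auto

lemma main:
  fixes \<tau> \<alpha> :: "('m::monoid_mult \<Rightarrow> 'a) \<Rightarrow> ('m \<Rightarrow> 'a)" and y :: "'m \<Rightarrow> 'a"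
  assumes ss: "strongly_sofic TYPE('m)" and finA: "finite A" and a0: "a0 \<in> A"
  and finS: "finite S" and locS: "\<forall>x y. (\<forall>m. x m \<in> A) \<longrightarrow> (\<forall>m. y m \<in> A) \<longrightarrow> (\<forall>s\<in>S. x s = y s) \<longrightarrow> \<tau> x 1 = \<tau> y 1"
  and finT: "finite T" and locT: "\<forall>x y. (\<forall>m. x m \<in> A) \<longrightarrow> (\<forall>m. y m \<in> A) \<longrightarrow> (\<forall>s\<in>T. x s = y s) \<longrightarrow> \<alpha> x 1 = \<alpha> y 1"
  and eqv: "\<forall>m x. (\<forall>m. x m \<in> A) \<longrightarrow> \<tau> (shift m x) = shift m (\<tau> x)"
  and val: "\<forall>x. (\<forall>m. x m \<in> A) \<longrightarrow> (\<forall>m. \<tau> x m \<in> A)"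
  and linv: "\<forall>x. (\<forall>m. x m \<in> A) \<longrightarrow> \<alpha> (\<tau> x) = x"
  and finO: "finite \<Omega>" and yA: "\<forall>m. y m \<in> A" and pat: "\<forall>x. (\<forall>m. x m \<in> A) \<longrightarrow> (\<exists>\<omega>\<in>\<Omega>. \<tau> x \<omega> \<noteq> y \<omega>)"
  shows False
proof -
  have loc: "\<tau> x' 1 = \<tau> x j" if x: "\<forall>m. x m \<in> A" and x': "\<forall>m. x' m \<in> A" and e: "\<forall>s\<in>S. x' s = x (s * j)" for x x' j
  proof -
    have sx: "\<forall>m. shift j x m \<in> A" using x by (simp add: shift_def)
    have "\<forall>s\<in>S. x' s = shift j x s" using e by (simp add: shift_def)
    then have "\<tau> x' 1 = \<tau> (shift j x) 1" using locS x' sx by blast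
    also have "\<tau> (shift j x) = shift j (\<tau> x)" using eqv x by blast
    then have "\<tau> (shift j x) 1 = \<tau> x j" by (simp add: shift_def)
    finally show ?thesis .
  qed
  define K where "K = S \<union> T \<union> \<Omega>"
  have finK: "finite K" using finS finT finO by (simp add: K_def)
  obtain \<Delta> :: nat where \<Delta>: "\<Delta> \<ge> 1" "\<forall>\<epsilon>::real. \<epsilon> > 0 \<longrightarrow>
          (\<exists>(D::nat set) (\<phi>::'m \<Rightarrow> nat \<Rightarrow> nat).
             finite D \<and> D \<noteq> {} \<and>
             (\<forall>m. \<forall>v\<in>D. \<phi> m v \<in> D) \<and>
             (\<forall>v\<in>D. \<phi> 1 v = v) \<and>
             (\<forall>k1\<in>K. \<forall>k2\<in>K. ham_dist D (\<phi> (k1 * k2)) (\<phi> k1 \<circ> \<phi> k2) \<le> \<epsilon>) \<and>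
             (\<forall>k1\<in>K. \<forall>k2\<in>K. k1 \<noteq> k2 \<longrightarrow> ham_dist D (\<phi> k1) (\<phi> k2) \<ge> 1 - \<epsilon>) \<and>
             (\<forall>k\<in>K. \<forall>v\<in>D. card {u \<in> D. \<phi> k u = v} \<le> \<Delta>))"
    using ss[unfolded strongly_sofic_def, rule_format, OF finK] apply (elim exE conjE) apply (rule that) apply assumption apply assumption done
  define a where "a = card A"
  define r where "r = card \<Omega>"
  define b where "b = a ^ r"
  define L where "L = r * r * \<Delta> + 1"
  have a1: "a \<ge> 1" using finA a0 by (auto simp: a_def card_gt_0_iff Suc_le_eq)
  have b1: "b \<ge> 1" using a1 by (simp add: b_def)
  have "((real b - 1) / real b) < 1" using b1 by (simp add: divide_simps)
  then obtain k where k: "((real b - 1) / real b) ^ k < 1 / real a"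
    using real_arch_pow_inv[of "1 / real a"] a1 by auto
  define c2 where "c2 = 2 * real (card K) ^ 2"
  define \<epsilon> where "\<epsilon> = 1 / (real (k * L + 1) * (c2 + 1))"
  have c2: "c2 \<ge> 0" by (simp add: c2_def)
  have kL: "real (k * L + 1) > 0" by (simp only: of_nat_0_less_iff)
  have \<epsilon>0: "\<epsilon> > 0" using c2 kL unfolding \<epsilon>_def by (intro divide_pos_pos mult_pos_pos) auto
  obtain D :: "nat set" and \<phi> :: "'m \<Rightarrow> nat \<Rightarrow> nat" where
    finD: "finite D" and neD: "D \<noteq> {}" and cl: "\<forall>m. \<forall>v\<in>D. \<phi> m v \<in> D" and one: "\<forall>v\<in>D. \<phi> 1 v = v"
    and mul: "\<forall>k1\<in>K. \<forall>k2\<in>K. ham_dist D (\<phi> (k1 * k2)) (\<phi> k1 \<circ> \<phi> k2) \<le> \<epsilon>"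
    and sep: "\<forall>k1\<in>K. \<forall>k2\<in>K. k1 \<noteq> k2 \<longrightarrow> ham_dist D (\<phi> k1) (\<phi> k2) \<ge> 1 - \<epsilon>"
    and deg: "\<forall>k\<in>K. \<forall>v\<in>D. card {u \<in> D. \<phi> k u = v} \<le> \<Delta>"
    using \<Delta>(2)[rule_format, OF \<epsilon>0] apply (elim exE conjE) apply (rule that) apply assumption+ done

  have KS: "S \<subseteq> K" and KT: "T \<subseteq> K" and KO: "\<Omega> \<subseteq> K" by (auto simp: K_def)
  define B1 where "B1 = (\<Union>p\<in>K\<times>K. {v\<in>D. \<phi> (fst p * snd p) v \<noteq> (\<phi> (fst p) \<circ> \<phi> (snd p)) v})"
  define B2 where "B2 = (\<Union>p\<in>K\<times>K. {v\<in>D. fst p \<noteq> snd p \<and> \<phi> (fst p) v = \<phi> (snd p) v})"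
  have finKK: "finite (K \<times> K)" using finK by simp
  have cB1: "real (card B1) \<le> real (card (K \<times> K)) * (\<epsilon> * real (card D))"
  proof -
    have "card B1 \<le> (\<Sum>p\<in>K\<times>K. card {v\<in>D. \<phi> (fst p * snd p) v \<noteq> (\<phi> (fst p) \<circ> \<phi> (snd p)) v})"
      unfolding B1_def by (rule card_UN_le[OF finKK])
    then have "real (card B1) \<le> (\<Sum>p\<in>K\<times>K. real (card {v\<in>D. \<phi> (fst p * snd p) v \<noteq> (\<phi> (fst p) \<circ> \<phi> (snd p)) v}))"
      by (simp only: of_nat_sum[symmetric] of_nat_le_iff)
    also have "\<dots> \<le> (\<Sum>p\<in>K\<times>K. \<epsilon> * real (card D))"
    proof (rule sum_mono)
      fix p assume p: "p \<in> K \<times> K"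
      then have "ham_dist D (\<phi> (fst p * snd p)) (\<phi> (fst p) \<circ> \<phi> (snd p)) \<le> \<epsilon>" using mul by auto
      from ham1[OF finD neD this]
      show "real (card {v\<in>D. \<phi> (fst p * snd p) v \<noteq> (\<phi> (fst p) \<circ> \<phi> (snd p)) v}) \<le> \<epsilon> * real (card D)" .
    qed
    finally show ?thesis by simp
  qed
  have cB2: "real (card B2) \<le> real (card (K \<times> K)) * (\<epsilon> * real (card D))"
  proof -
    have "card B2 \<le> (\<Sum>p\<in>K\<times>K. card {v\<in>D. fst p \<noteq> snd p \<and> \<phi> (fst p) v = \<phi> (snd p) v})"
      unfolding B2_def by (rule card_UN_le[OF finKK])
    then have "real (card B2) \<le> (\<Sum>p\<in>K\<times>K. real (card {v\<in>D. fst p \<noteq> snd p \<and> \<phi> (fst p) v = \<phi> (snd p) v}))"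
      by (simp only: of_nat_sum[symmetric] of_nat_le_iff)
    also have "\<dots> \<le> (\<Sum>p\<in>K\<times>K. \<epsilon> * real (card D))"
    proof (rule sum_mono)
      fix p assume p: "p \<in> K \<times> K"
      show "real (card {v\<in>D. fst p \<noteq> snd p \<and> \<phi> (fst p) v = \<phi> (snd p) v}) \<le> \<epsilon> * real (card D)"
      proof (cases "fst p = snd p")
        case True then show ?thesis using \<epsilon>0 by simp
      next
        case False
        then have "{v\<in>D. fst p \<noteq> snd p \<and> \<phi> (fst p) v = \<phi> (snd p) v} = {v\<in>D. \<phi> (fst p) v = \<phi> (snd p) v}" by auto
        then show ?thesis using ham2[OF finD neD, of \<epsilon> "\<phi> (fst p)" "\<phi> (snd p)"] sep p False by auto
      qed
    qed
    finally show ?thesis by simp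
  qed
  define G where "G = D - (B1 \<union> B2)"
  have GD: "G \<subseteq> D" by (auto simp: G_def)
  have finG: "finite G" using finD GD finite_subset by blast
  have good1: "\<phi> (k1 * k2) v = \<phi> k1 (\<phi> k2 v)" if "v \<in> G" "k1 \<in> K" "k2 \<in> K" for v k1 k2
    using that by (force simp: G_def B1_def)
  have good2: "\<phi> k1 v \<noteq> \<phi> k2 v" if "v \<in> G" "k1 \<in> K" "k2 \<in> K" "k1 \<noteq> k2" for v k1 k2
    using that by (force simp: G_def B2_def)
  define bad where "bad = card D - card G"
  have B12D: "B1 \<union> B2 \<subseteq> D" by (auto simp: B1_def B2_def)
  have cG: "card G = card D - card (B1 \<union> B2)"
    unfolding G_def using card_Diff_subset[OF finite_subset[OF B12D finD] B12D] .
  have badle: "real bad \<le> c2 * \<epsilon> * real (card D)"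
  proof -
    have "bad \<le> card B1 + card B2" unfolding bad_def cG
      using card_Un_le[of B1 B2] card_mono[OF finD B12D] by linarith
    then have "real bad \<le> real (card B1) + real (card B2)" by linarith
    also have "\<dots> \<le> 2 * (real (card (K \<times> K)) * (\<epsilon> * real (card D)))" using cB1 cB2 by linarith
    also have "\<dots> = c2 * \<epsilon> * real (card D)"
      by (simp add: c2_def card_cartesian_product power2_eq_square)
    finally show ?thesis .
  qed
  define xc where "xc c v = (\<lambda>m. c (\<phi> m v))" for c :: "nat \<Rightarrow> 'a" and v
  define \<tau>D where "\<tau>D c = (\<lambda>v\<in>D. \<tau> (xc c v) 1)" for c
  define \<alpha>D where "\<alpha>D c = (\<lambda>v\<in>D. \<alpha> (xc c v) 1)" for c
  have xcA: "\<forall>m. xc c v m \<in> A" if "c \<in> D \<rightarrow>\<^sub>E A" "v \<in> D" for c v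
    using that cl by (auto simp: xc_def)
  have \<tau>DA: "\<tau>D c \<in> D \<rightarrow>\<^sub>E A" if "c \<in> D \<rightarrow>\<^sub>E A" for c
    using xcA[OF that] val by (auto simp: \<tau>D_def)
  have F0: "\<tau>D c (\<phi> j v) = \<tau> (xc c v) j" if c: "c \<in> D \<rightarrow>\<^sub>E A" and v: "v \<in> G" and j: "j \<in> K" for c v j
  proof -
    have vD: "v \<in> D" using v GD by auto
    have jv: "\<phi> j v \<in> D" using cl vD by auto
    have "\<tau>D c (\<phi> j v) = \<tau> (xc c (\<phi> j v)) 1" using jv by (simp add: \<tau>D_def)
    also have "\<dots> = \<tau> (xc c v) j"
    proof (rule loc)
      show "\<forall>m. xc c v m \<in> A" using xcA[OF c vD] .
      show "\<forall>m. xc c (\<phi> j v) m \<in> A" using xcA[OF c jv] .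
      show "\<forall>s\<in>S. xc c (\<phi> j v) s = xc c v (s * j)"
        using good1[OF v _ j] KS by (auto simp: xc_def)
    qed
    finally show ?thesis .
  qed
  have F2: "\<alpha>D (\<tau>D c) v = c v" if c: "c \<in> D \<rightarrow>\<^sub>E A" and v: "v \<in> G" for c v
  proof -
    have vD: "v \<in> D" using v GD by auto
    have "\<alpha>D (\<tau>D c) v = \<alpha> (xc (\<tau>D c) v) 1" using vD by (simp add: \<alpha>D_def)
    also have "\<dots> = \<alpha> (\<tau> (xc c v)) 1"
    proof -
      have "\<forall>t\<in>T. xc (\<tau>D c) v t = \<tau> (xc c v) t"
        using F0[OF c v] KT by (auto simp: xc_def)
      moreover have "\<forall>m. xc (\<tau>D c) v m \<in> A" using xcA[OF \<tau>DA[OF c] vD] .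
      moreover have "\<forall>m. \<tau> (xc c v) m \<in> A" using val xcA[OF c vD] by blast
      ultimately show ?thesis using locT by blast
    qed
    also have "\<dots> = xc c v 1" using linv xcA[OF c vD] by simp
    also have "\<dots> = c v" using one vD by (simp add: xc_def)
    finally show ?thesis .
  qed
  define I where "I = \<tau>D ` (D \<rightarrow>\<^sub>E A)"
  have finI: "finite I" unfolding I_def using finD finA by (simp add: finite_PiE)
  have lower: "a ^ card G \<le> card I"
  proof -
    have "G \<rightarrow>\<^sub>E A \<subseteq> (\<lambda>c'. restrict (\<alpha>D c') G) ` I"
    proof
      fix g assume g: "g \<in> G \<rightarrow>\<^sub>E A"
      define c where "c = (\<lambda>v\<in>D. if v \<in> G then g v else a0)"
      have c: "c \<in> D \<rightarrow>\<^sub>E A" using g a0 by (auto simp: c_def)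
      have "restrict (\<alpha>D (\<tau>D c)) G = g"
      proof
        fix v show "restrict (\<alpha>D (\<tau>D c)) G v = g v"
          using F2[OF c] g GD by (cases "v \<in> G") (auto simp: c_def)
      qed
      then show "g \<in> (\<lambda>c'. restrict (\<alpha>D c') G) ` I" using c unfolding I_def by blast
    qed
    then have "card (G \<rightarrow>\<^sub>E A) \<le> card ((\<lambda>c'. restrict (\<alpha>D c') G) ` I)"
      by (intro card_mono finite_imageI finI)
    also have "\<dots> \<le> card I" by (rule card_image_le[OF finI])
    finally show ?thesis using finG by (simp add: card_PiE a_def)
  qed
  define R where "R u v = (\<exists>\<omega>\<in>\<Omega>. \<exists>\<omega>'\<in>\<Omega>. \<phi> \<omega> u = \<phi> \<omega>' v)" for u v
  have Rsym: "\<forall>u v. R u v \<longrightarrow> R v u" unfolding R_def by metis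
  have Rdeg: "\<forall>v\<in>G. card (insert v {u\<in>G. R u v}) \<le> L"
  proof
    fix v assume v: "v \<in> G"
    have vD: "v \<in> D" using v GD by auto
    have sub: "{u\<in>G. R u v} \<subseteq> (\<Union>\<omega>\<in>\<Omega>. \<Union>\<omega>'\<in>\<Omega>. {u\<in>D. \<phi> \<omega> u = \<phi> \<omega>' v})"
      using GD by (auto simp: R_def)
    have "card (\<Union>\<omega>\<in>\<Omega>. \<Union>\<omega>'\<in>\<Omega>. {u\<in>D. \<phi> \<omega> u = \<phi> \<omega>' v}) \<le> (\<Sum>\<omega>\<in>\<Omega>. card (\<Union>\<omega>'\<in>\<Omega>. {u\<in>D. \<phi> \<omega> u = \<phi> \<omega>' v}))"
      by (rule card_UN_le[OF finO])
    also have "\<dots> \<le> (\<Sum>\<omega>\<in>\<Omega>. r * \<Delta>)"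
    proof (rule sum_mono)
      fix \<omega> assume \<omega>: "\<omega> \<in> \<Omega>"
      have "card (\<Union>\<omega>'\<in>\<Omega>. {u\<in>D. \<phi> \<omega> u = \<phi> \<omega>' v}) \<le> (\<Sum>\<omega>'\<in>\<Omega>. card {u\<in>D. \<phi> \<omega> u = \<phi> \<omega>' v})"
        by (rule card_UN_le[OF finO])
      also have "\<dots> \<le> (\<Sum>\<omega>'\<in>\<Omega>. \<Delta>)"
        by (rule sum_mono) (use deg \<omega> KO cl vD in blast)
      finally show "card (\<Union>\<omega>'\<in>\<Omega>. {u\<in>D. \<phi> \<omega> u = \<phi> \<omega>' v}) \<le> r * \<Delta>" by (simp add: r_def)
    qed
    finally have "card (\<Union>\<omega>\<in>\<Omega>. \<Union>\<omega>'\<in>\<Omega>. {u\<in>D. \<phi> \<omega> u = \<phi> \<omega>' v}) \<le> r * r * \<Delta>"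
      by (simp add: r_def mult.assoc)
    moreover have "card {u\<in>G. R u v} \<le> card (\<Union>\<omega>\<in>\<Omega>. \<Union>\<omega>'\<in>\<Omega>. {u\<in>D. \<phi> \<omega> u = \<phi> \<omega>' v})"
      by (rule card_mono[OF _ sub]) (use finD finO in simp)
    ultimately have "card {u\<in>G. R u v} \<le> r * r * \<Delta>" by linarith
    then show "card (insert v {u\<in>G. R u v}) \<le> L"
      unfolding L_def using card_insert_le_m1 by (simp add: card_insert_if finG)
  qed
  obtain V where V: "V \<subseteq> G" "\<forall>u\<in>V. \<forall>v\<in>V. u \<noteq> v \<longrightarrow> \<not> R u v" "card G \<le> L * card V"
    using indep[OF finG Rsym Rdeg] by blast
  define N where "N = card V"
  have finV: "finite V" using V(1) finG finite_subset by blast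
  define U where "U = (\<Union>v\<in>V. (\<lambda>\<omega>. \<phi> \<omega> v) ` \<Omega>)"
  have UD: "U \<subseteq> D" using V(1) GD cl by (auto simp: U_def)
  have cU: "card U = N * r"
  proof -
    have "card U = (\<Sum>v\<in>V. card ((\<lambda>\<omega>. \<phi> \<omega> v) ` \<Omega>))"
      unfolding U_def
    proof (rule card_UN_disjoint[OF finV])
      show "\<forall>v\<in>V. finite ((\<lambda>\<omega>. \<phi> \<omega> v) ` \<Omega>)" using finO by simp
      show "\<forall>u\<in>V. \<forall>v\<in>V. u \<noteq> v \<longrightarrow> (\<lambda>\<omega>. \<phi> \<omega> u) ` \<Omega> \<inter> (\<lambda>\<omega>. \<phi> \<omega> v) ` \<Omega> = {}"
        using V(2) by (auto simp: R_def)
    qed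
    also have "\<dots> = (\<Sum>v\<in>V. r)"
    proof (rule sum.cong[OF refl])
      fix v assume "v \<in> V"
      then have v: "v \<in> G" using V(1) by auto
      have "inj_on (\<lambda>\<omega>. \<phi> \<omega> v) \<Omega>"
        by (rule inj_onI) (use good2[OF v] KO in blast)
      then show "card ((\<lambda>\<omega>. \<phi> \<omega> v) ` \<Omega>) = r" by (simp add: card_image r_def)
    qed
    finally show ?thesis by (simp add: N_def)
  qed
  define p where "p = restrict y \<Omega>"
  have pA: "p \<in> \<Omega> \<rightarrow>\<^sub>E A" using yA by (simp add: p_def)
  define \<Phi> where "\<Phi> c' = (restrict c' (D - U), (\<lambda>v\<in>V. \<lambda>\<omega>\<in>\<Omega>. c' (\<phi> \<omega> v)))" for c' :: "nat \<Rightarrow> 'a"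
  have inj\<Phi>: "inj_on \<Phi> (D \<rightarrow>\<^sub>E A)"
  proof (rule inj_onI)
    fix c1 c2 assume c1: "c1 \<in> D \<rightarrow>\<^sub>E A" and c2: "c2 \<in> D \<rightarrow>\<^sub>E A" and e: "\<Phi> c1 = \<Phi> c2"
    have e1: "restrict c1 (D - U) = restrict c2 (D - U)" and e2: "(\<lambda>v\<in>V. \<lambda>\<omega>\<in>\<Omega>. c1 (\<phi> \<omega> v)) = (\<lambda>v\<in>V. \<lambda>\<omega>\<in>\<Omega>. c2 (\<phi> \<omega> v))"
      using e by (simp_all add: \<Phi>_def)
    show "c1 = c2"
    proof
      fix x
      show "c1 x = c2 x"
      proof (cases "x \<in> D")
        case False show ?thesis using PiE_arb[OF c1 False] PiE_arb[OF c2 False] by simp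
      next
        case xD: True
        show ?thesis
        proof (cases "x \<in> U")
          case True
          then obtain v \<omega> where v: "v \<in> V" and \<omega>: "\<omega> \<in> \<Omega>" and x: "x = \<phi> \<omega> v" by (auto simp: U_def)
          have "(\<lambda>v\<in>V. \<lambda>\<omega>\<in>\<Omega>. c1 (\<phi> \<omega> v)) v \<omega> = (\<lambda>v\<in>V. \<lambda>\<omega>\<in>\<Omega>. c2 (\<phi> \<omega> v)) v \<omega>"
            by (rule fun_cong[OF fun_cong[OF e2]])
          then show ?thesis using v \<omega> unfolding x by simp
        next
          case False
          have "restrict c1 (D - U) x = restrict c2 (D - U) x" by (rule fun_cong[OF e1])
          then show ?thesis using False xD by simp
        qed
      qed
    qed
  qed
  have IsubPi: "I \<subseteq> D \<rightarrow>\<^sub>E A" using \<tau>DA by (auto simp: I_def)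
  have \<Phi>I: "\<Phi> ` I \<subseteq> ((D - U) \<rightarrow>\<^sub>E A) \<times> (V \<rightarrow>\<^sub>E ((\<Omega> \<rightarrow>\<^sub>E A) - {p}))"
  proof
    fix z assume "z \<in> \<Phi> ` I"
    then obtain c where c: "c \<in> D \<rightarrow>\<^sub>E A" and z: "z = \<Phi> (\<tau>D c)" by (auto simp: I_def)
    have tc: "\<tau>D c \<in> D \<rightarrow>\<^sub>E A" using \<tau>DA[OF c] .
    have "(\<lambda>\<omega>\<in>\<Omega>. \<tau>D c (\<phi> \<omega> v)) \<in> (\<Omega> \<rightarrow>\<^sub>E A) - {p}" if v: "v \<in> V" for v
    proof
      have vG: "v \<in> G" using v V(1) by auto
      then have vD: "v \<in> D" using GD by auto
      show "(\<lambda>\<omega>\<in>\<Omega>. \<tau>D c (\<phi> \<omega> v)) \<in> \<Omega> \<rightarrow>\<^sub>E A" using tc cl vD by auto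
      obtain \<omega> where \<omega>: "\<omega> \<in> \<Omega>" "\<tau> (xc c v) \<omega> \<noteq> y \<omega>" using pat xcA[OF c vD] by blast
      have "(\<lambda>\<omega>\<in>\<Omega>. \<tau>D c (\<phi> \<omega> v)) \<omega> \<noteq> p \<omega>"
        using \<omega> F0[OF c vG] KO by (auto simp: p_def)
      then show "(\<lambda>\<omega>\<in>\<Omega>. \<tau>D c (\<phi> \<omega> v)) \<notin> {p}" by auto
    qed
    then show "z \<in> ((D - U) \<rightarrow>\<^sub>E A) \<times> (V \<rightarrow>\<^sub>E ((\<Omega> \<rightarrow>\<^sub>E A) - {p}))"
      using tc by (auto simp: z \<Phi>_def)
  qed
  have upper: "card I \<le> a ^ (card D - N * r) * (b - 1) ^ N"
  proof -
    have "card I = card (\<Phi> ` I)" using card_image[OF inj_on_subset[OF inj\<Phi> IsubPi]] by simp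
    also have "\<dots> \<le> card (((D - U) \<rightarrow>\<^sub>E A) \<times> (V \<rightarrow>\<^sub>E ((\<Omega> \<rightarrow>\<^sub>E A) - {p})))"
      by (rule card_mono[OF _ \<Phi>I]) (use finD finA finV finO in \<open>simp add: finite_PiE\<close>)
    also have "\<dots> = a ^ (card D - N * r) * (b - 1) ^ N"
    proof -
      have "card ((D - U) \<rightarrow>\<^sub>E A) = a ^ (card D - N * r)"
        using finD UD cU by (simp add: card_PiE a_def card_Diff_subset finite_subset)
      moreover have "card ((\<Omega> \<rightarrow>\<^sub>E A) - {p}) = b - 1"
        using pA finO finA by (simp add: card_PiE a_def b_def r_def finite_PiE)
      ultimately show ?thesis using finV by (simp add: card_cartesian_product card_PiE N_def)
    qed
    finally show ?thesis .
  qed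
  have Nr: "N * r \<le> card D" using cU card_mono[OF finD UD] by simp
  have cGD: "card G \<le> card D" using card_mono[OF finD GD] .
  have Nbig: "N > k * bad"
  proof (rule ccontr)
    assume "\<not> N > k * bad"
    then have "N \<le> k * bad" by simp
    then have "card G \<le> L * (k * bad)" using V(3) N_def by (metis le_trans mult_le_mono2)
    moreover have "card D = card G + bad" using cGD by (simp add: bad_def)
    ultimately have "card D \<le> (k * L + 1) * bad" by (simp add: algebra_simps)
    then have "real (card D) \<le> real (k * L + 1) * real bad" by (metis of_nat_le_iff of_nat_mult)
    also have "\<dots> \<le> real (k * L + 1) * (c2 * \<epsilon> * real (card D))"
      by (rule mult_left_mono[OF badle]) simp
    also have "\<dots> = c2 / (c2 + 1) * real (card D)"
      unfolding \<epsilon>_def by (rule aux_eps[OF kL c2])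
    also have "\<dots> < real (card D)"
    proof -
      have "real (card D) > 0" using finD neD by (simp add: card_gt_0_iff)
      moreover have "c2 / (c2 + 1) < 1" using c2 by (simp add: divide_simps)
      ultimately show ?thesis using c2 by (simp add: divide_simps)
    qed
    finally show False by simp
  qed
  show False
  proof (rule final_arith[OF a1 b_def k Nbig _ Nr])
    show "bad \<le> card D" by (simp add: bad_def)
    have "card D - bad = card G" using cGD by (simp add: bad_def)
    then show "a ^ (card D - bad) \<le> a ^ (card D - N * r) * (b - 1) ^ N"
      using lower upper by simp
  qed
qed



theorem corollary1p2:
  fixes A :: "'a set"
  assumes "strongly_sofic TYPE('m::monoid_mult)"
    and "finite A"
  shows "CA_directly_finite TYPE('m) A"
  unfolding CA_directly_finite_def
proof (intro ballI impI)
  fix \<sigma> \<tau> :: "('m \<Rightarrow> 'a) \<Rightarrow> ('m \<Rightarrow> 'a)" and x0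
  assume s: "\<sigma> \<in> CA TYPE('m) A" and t: "\<tau> \<in> CA TYPE('m) A"
    and li: "\<forall>x\<in>topspace (config_top TYPE('m) A). \<sigma> (\<tau> x) = x"
    and x0: "x0 \<in> topspace (config_top TYPE('m) A)"
  show "\<tau> (\<sigma> x0) = x0"
  proof (rule ccontr)
    assume ne: "\<tau> (\<sigma> x0) \<noteq> x0"
    have x0A: "\<forall>m. x0 m \<in> A" using x0 by (simp add: ts)
    then obtain a0 where a0: "a0 \<in> A" by blast
    have ny: "\<forall>x::'m\<Rightarrow>'a. (\<forall>m. x m \<in> A) \<longrightarrow> \<tau> x \<noteq> x0"
    proof (intro allI impI)
      fix x :: "'m \<Rightarrow> 'a" assume xA: "\<forall>m. x m \<in> A"
      show "\<tau> x \<noteq> x0"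
      proof
        assume "\<tau> x = x0"
        then have "\<tau> (\<sigma> x0) = x0" using li xA by (auto simp: ts)
        then show False using ne by simp
      qed
    qed
    obtain \<Omega> where \<Omega>: "finite \<Omega>" "\<forall>x::'m\<Rightarrow>'a. (\<forall>m. x m \<in> A) \<longrightarrow> (\<exists>\<omega>\<in>\<Omega>. \<tau> x \<omega> \<noteq> x0 \<omega>)"
      using pattern[OF assms(2) t x0A ny] by blast
    obtain S where S: "finite S" "\<forall>x y. (\<forall>m. x m \<in> A) \<longrightarrow> (\<forall>m. y m \<in> A) \<longrightarrow> (\<forall>s\<in>S. x s = y s) \<longrightarrow> \<tau> x 1 = \<tau> y (1::'m)"
      using ca_local[OF assms(2) t] by blast
    obtain T where T: "finite T" "\<forall>x y. (\<forall>m. x m \<in> A) \<longrightarrow> (\<forall>m. y m \<in> A) \<longrightarrow> (\<forall>s\<in>T. x s = y s) \<longrightarrow> \<sigma> x 1 = \<sigma> y (1::'m)"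
      using ca_local[OF assms(2) s] by blast
    have eqv: "\<forall>m (x::'m\<Rightarrow>'a). (\<forall>m. x m \<in> A) \<longrightarrow> \<tau> (shift m x) = shift m (\<tau> x)"
      using t by (auto simp: CA_def ts)
    have val: "\<forall>x::'m\<Rightarrow>'a. (\<forall>m. x m \<in> A) \<longrightarrow> (\<forall>m. \<tau> x m \<in> A)"
    proof (intro allI impI)
      fix x :: "'m \<Rightarrow> 'a" and m assume "\<forall>m. x m \<in> A"
      then have "x \<in> topspace (config_top TYPE('m) A)" by (simp add: ts)
      then have "\<tau> x \<in> topspace (config_top TYPE('m) A)"
        using t by (auto simp: CA_def continuous_map_def)
      then show "\<tau> x m \<in> A" by (simp add: ts)
    qed
    have linv: "\<forall>x::'m\<Rightarrow>'a. (\<forall>m. x m \<in> A) \<longrightarrow> \<sigma> (\<tau> x) = x" using li by (simp add: ts)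
    show False
      by (rule main[OF assms(1,2) a0 S T eqv val linv \<Omega>(1) x0A \<Omega>(2)])
  qed
qed


end
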